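(* Let $p>1$ and $x\in(0,1)$, and put $z=\left(\frac{x^p}{1+x^p}\right)^{1/p}$. Then $$z\left(1+\frac{\log(1+x^p)}{1+p}\right)<\operatorname{arsinh}_p x<z\left(1+\frac1p\log(1+x^p)\right)$$ and $$x\left(1-\frac{1}{1+p}\log(1-x^p)\right)<\operatorname{artanh}_p x<x\left(1-\frac1p\log(1-x^p)\right).$$
   Context: For $p>1$ and $x\in(0,1)$: $\operatorname{arsinh}_p x=\int_0^x(1+t^p)^{-1/p}\,dt$ and $\operatorname{artanh}_p x=\int_0^x(1-t^p)^{-1}\,dt$. *)

theory Defs
  imports "HOL-Analysis.Analysis"
begin

definition arsinh_p :: "real \<Rightarrow> real \<Rightarrow> real" where
  "arsinh_p p x = integral {0..x} (\<lambda>t. (1 + t powr p) powr (-1 / p))"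

definition artanh_p :: "real \<Rightarrow> real \<Rightarrow> real" where
  "artanh_p p x = integral {0..x} (\<lambda>t. 1 / (1 - t powr p))"

end

theory Submission
  imports Defs
begin

lemma key:
  fixes f F F' :: "real \<Rightarrow> real"
  assumes x: "0 < x" and cf: "continuous_on {0..x} f" and cF: "continuous_on {0..x} F"
    and F0: "F 0 = 0"
    and dF: "\<And>y. 0 < y \<Longrightarrow> y < x \<Longrightarrow> (F has_real_derivative F' y) (at y)"
  shows "(\<forall>y. 0 < y \<and> y < x \<longrightarrow> F' y < f y) \<Longrightarrow> F x < integral {0..x} f"
    and "(\<forall>y. 0 < y \<and> y < x \<longrightarrow> F' y > f y) \<Longrightarrow> F x > integral {0..x} f"
proof -
  define D where "D = (\<lambda>y. integral {0..y} f - F y)"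
  have cD: "continuous_on {0..x} D" unfolding D_def
    by (intro continuous_intros indefinite_integral_continuous_1 integrable_continuous_real cf cF)
  have dD: "(D has_real_derivative (f y - F' y)) (at y)" if "0 < y" "y < x" for y
  proof -
    have "y \<in> interior {0..x}" using that by simp
    then have "((\<lambda>u. integral {0..u} f) has_vector_derivative f y) (at y)"
      using integral_has_vector_derivative[OF cf, of y] that at_within_interior[of y "{0..x}"] by auto
    then have "((\<lambda>u. integral {0..u} f) has_real_derivative f y) (at y)"
      by (simp add: has_real_derivative_iff_has_vector_derivative)
    then show ?thesis unfolding D_def using dF[OF that] by (intro derivative_intros)
  qed
  obtain l z where z: "0 < z" "z < x" "DERIV D z :> l" "D x - D 0 = (x - 0) * l"
    using MVT[OF x cD] dD real_differentiable_def by blast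
  have l: "l = f z - F' z" using DERIV_unique[OF z(3) dD[OF z(1,2)]] .
  have D0: "D 0 = 0" by (simp add: D_def F0)
  show "(\<forall>y. 0 < y \<and> y < x \<longrightarrow> F' y < f y) \<Longrightarrow> F x < integral {0..x} f"
  proof -
    assume "\<forall>y. 0 < y \<and> y < x \<longrightarrow> F' y < f y"
    then have "l > 0" using l z by auto
    then have "D x > 0" using z D0 x by simp
    then show ?thesis by (simp add: D_def)
  qed
  show "(\<forall>y. 0 < y \<and> y < x \<longrightarrow> F' y > f y) \<Longrightarrow> F x > integral {0..x} f"
  proof -
    assume "\<forall>y. 0 < y \<and> y < x \<longrightarrow> F' y > f y"
    then have "l < 0" using l z by auto
    then have "D x < 0" using z D0 x by (simp add: mult_pos_neg)
    then show ?thesis by (simp add: D_def)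
  qed
qed

lemma cpow: "p > 0 \<Longrightarrow> continuous_on {0..x} (\<lambda>y::real. y powr p)"
  by (rule continuous_on_powr') (auto intro: continuous_intros)

lemma art:
  fixes p x :: real
  assumes p: "p > 1" and x: "0 < x" "x < 1"
  shows "x * (1 - (1 / (1 + p)) * ln (1 - x powr p)) < artanh_p p x
         \<and> artanh_p p x < x * (1 - (1 / p) * ln (1 - x powr p))"
proof -
  have lt1: "y powr p < 1" if "0 \<le> y" "y \<le> x" for y
  proof -
    have "y powr p \<le> x powr p" using that p by (intro powr_mono2) auto
    also have "x powr p < 1 powr p" using x p by (intro powr_less_mono2) auto
    also have "... = 1" by simp
    finally show ?thesis .
  qed
  have cu: "continuous_on {0..x} (\<lambda>t. t powr p)" using cpow p by auto
  have cl: "continuous_on {0..x} (\<lambda>t. ln (1 - t powr p))"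
    apply (intro continuous_on_ln continuous_on_diff continuous_on_const cu)
    using lt1 by fastforce
  have cf: "continuous_on {0..x} (\<lambda>t. 1 / (1 - t powr p))"
    apply (intro continuous_on_divide continuous_on_diff continuous_on_const cu)
    using lt1 by fastforce
  have pp: "y * y powr (p - 1) = y powr p" if "y > 0" for y
    using that by (simp add: powr_mult_base)
  have d1: "((\<lambda>y. y * (1 - (1 / p) * ln (1 - y powr p))) has_real_derivative
      (1 - ln (1 - y powr p) / p + y powr p / (1 - y powr p))) (at y)" if "0 < y" "y < x" for y
    using that lt1[of y] p pp[of y]
    by (auto intro!: derivative_eq_intros simp: field_simps)
  have d2: "((\<lambda>y. y * (1 - (1 / (1 + p)) * ln (1 - y powr p))) has_real_derivative
      (1 - ln (1 - y powr p) / (1 + p) + p * y powr p / ((1 + p) * (1 - y powr p)))) (at y)" if "0 < y" "y < x" for y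
    using that lt1[of y] p pp[of y]
    proof -
    have "1 + p \<noteq> 0" "1 - y powr p \<noteq> 0" using p lt1[of y] that by auto
    then show ?thesis using that p pp[of y] lt1[of y]
      by (auto intro!: derivative_eq_intros simp: mult.commute mult.left_commute)
  qed
  have up: "integral {0..x} (\<lambda>t. 1 / (1 - t powr p)) < x * (1 - (1 / p) * ln (1 - x powr p))"
  proof (rule key(2)[OF x(1) cf _ _ d1])
    show "continuous_on {0..x} (\<lambda>y. y * (1 - (1 / p) * ln (1 - y powr p)))"
      by (intro continuous_intros cl)
    show "0 * (1 - (1 / p) * ln (1 - 0 powr p)) = 0" by simp
    show "\<forall>y. 0 < y \<and> y < x \<longrightarrow> 1 / (1 - y powr p) < 1 - ln (1 - y powr p) / p + y powr p / (1 - y powr p)"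
    proof (intro allI impI)
      fix y assume y: "0 < y \<and> y < x"
      have u: "0 < y powr p" "y powr p < 1" using y lt1[of y] by auto
      have "ln (1 - y powr p) < 0" using u by simp
      then have "- ln (1 - y powr p) / p > 0" using p by (simp add: divide_neg_pos)
      moreover have "1 / (1 - y powr p) = 1 + y powr p / (1 - y powr p)" using u by (simp add: field_simps)
      ultimately show "1 / (1 - y powr p) < 1 - ln (1 - y powr p) / p + y powr p / (1 - y powr p)" by simp
    qed
  qed
  have lo: "x * (1 - (1 / (1 + p)) * ln (1 - x powr p)) < integral {0..x} (\<lambda>t. 1 / (1 - t powr p))"
  proof (rule key(1)[OF x(1) cf _ _ d2])
    show "continuous_on {0..x} (\<lambda>y. y * (1 - (1 / (1 + p)) * ln (1 - y powr p)))"
      by (intro continuous_intros cl)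
    show "0 * (1 - (1 / (1 + p)) * ln (1 - 0 powr p)) = 0" by simp
    show "\<forall>y. 0 < y \<and> y < x \<longrightarrow> 1 - ln (1 - y powr p) / (1 + p) + p * y powr p / ((1 + p) * (1 - y powr p)) < 1 / (1 - y powr p)"
    proof (intro allI impI)
      fix y assume y: "0 < y \<and> y < x"
      define u where "u = y powr p"
      have u: "0 < u" "u < 1" using y lt1[of y] by (auto simp: u_def)
      have L: "- ln (1 - u) < u / (1 - u)"
      proof -
        have "ln (1 + u / (1 - u)) < u / (1 - u)" using u by (intro ln_add_one_self_less_self) auto
        moreover have "1 + u / (1 - u) = 1 / (1 - u)" using u by (simp add: field_simps)
        ultimately show ?thesis using u by (simp add: ln_div)
      qed
      have nz: "1 + p \<noteq> 0" "1 - u \<noteq> 0" using u p by auto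
      have e: "1 - ln (1 - u) / (1 + p) + p * u / ((1 + p) * (1 - u)) - 1 / (1 - u)
            = (- ln (1 - u) - u / (1 - u)) / (1 + p)"
      proof -
        define v where "v = u / (1 - u)"
        have a: "p * u / ((1 + p) * (1 - u)) = p / (1 + p) * v" by (simp add: v_def)
        have b: "1 / (1 - u) = 1 + v" using nz by (simp add: v_def field_simps)
        have c: "\<And>q L v::real. q \<noteq> 0 \<Longrightarrow> 1 - L / q + (q - 1) / q * v - (1 + v) = (- L - v) / q"
          by (simp add: field_simps)
        show ?thesis unfolding a b v_def[symmetric] using c[of "1 + p" "ln (1 - u)" v] nz by simp
      qed
      have "(- ln (1 - u) - u / (1 - u)) / (1 + p) < 0" using L p by (intro divide_neg_pos) auto
      then show "1 - ln (1 - y powr p) / (1 + p) + p * y powr p / ((1 + p) * (1 - y powr p)) < 1 / (1 - y powr p)"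
        using e by (simp add: u_def)
    qed
  qed
  show ?thesis using up lo by (simp add: artanh_p_def)
qed

lemma dw:
  fixes p y :: real
  assumes p: "p > 1" and y: "0 < y"
  shows "((\<lambda>y. (1 + y powr p) powr (-1/p)) has_real_derivative
     - (y powr p / y) * ((1 + y powr p) powr (-1/p)) / (1 + y powr p)) (at y)"
proof -
  have B: "0 < 1 + y powr p" using y by (simp add: add_pos_nonneg)
  have e1: "(1 + y powr p) powr (- (1 / p) - 1) = (1 + y powr p) powr (- (1 / p)) / (1 + y powr p)"
    using B by (simp add: powr_diff)
  have e2: "y powr (p - 1) = y powr p / y" using y by (simp add: powr_diff)
  show ?thesis using p y B
    by (auto intro!: derivative_eq_intros simp: e1 e2 mult_ac)
qed

lemma alg1:
  fixes y u W L c p :: real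
  assumes "y > 0" "1 + u > 0"
  shows "(1 * W + (- (u / y) * W / (1 + u)) * y) * (1 + c * L) + (0 + c * (p * (u / y) / (1 + u))) * (y * W)
     = W / (1 + u) * (1 + c * L + c * p * u)"
proof -
  define d where "d = W / (1 + u)"
  have W: "W = d * (1 + u)" using assms by (simp add: d_def)
  have a: "(- (u / y) * W / (1 + u)) * y = - u * d" using assms by (simp add: d_def)
  have b: "(0 + c * (p * (u / y) / (1 + u))) * (y * W) = c * p * u * d" using assms by (simp add: d_def)
  have "(1 * W + (- (u / y) * W / (1 + u)) * y) * (1 + c * L) + (0 + c * (p * (u / y) / (1 + u))) * (y * W)
      = (W - u * d) * (1 + c * L) + c * p * u * d" by (simp only: a b) simp
  also have "... = d * (1 + c * L + c * p * u)" by (simp add: W algebra_simps)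
  also have "... = W / (1 + u) * (1 + c * L + c * p * u)" by (simp add: d_def)
  finally show ?thesis .
qed

lemma ars_gen:
  fixes p x c :: real
  assumes p: "p > 1" and x: "0 < x"
  defines "F \<equiv> (\<lambda>y. y * (1 + y powr p) powr (-1/p) * (1 + c * ln (1 + y powr p)))"
  defines "f \<equiv> (\<lambda>t. (1 + t powr p) powr (-1/p))"
  shows "(\<And>y. 0 < y \<Longrightarrow> c * (ln (1 + y powr p) + p * y powr p) < y powr p) \<Longrightarrow> F x < integral {0..x} f"
    and "(\<And>y. 0 < y \<Longrightarrow> c * (ln (1 + y powr p) + p * y powr p) > y powr p) \<Longrightarrow> F x > integral {0..x} f"
proof -
  have cu: "continuous_on {0..x} (\<lambda>t. t powr p)" using cpow p by auto
  have B: "\<And>y. 0 < 1 + y powr p" by (simp add: add_pos_nonneg)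
  have cW: "continuous_on {0..x} f" unfolding f_def
    apply (rule continuous_on_powr')
    using B by (auto intro!: continuous_intros cu simp: less_imp_le) (metis B less_irrefl)
  have cL: "continuous_on {0..x} (\<lambda>t. ln (1 + t powr p))"
    using B by (intro continuous_on_ln continuous_on_add continuous_on_const cu) (auto simp: less_imp_le, metis B less_irrefl)
  have cW': "continuous_on {0..x} (\<lambda>y. (1 + y powr p) powr (-1/p))" using cW by (simp add: f_def)
  have cF: "continuous_on {0..x} F" unfolding F_def
    by (intro continuous_on_mult continuous_on_add continuous_on_const continuous_on_id cW' cL)
  have F0: "F 0 = 0" by (simp add: F_def)
  define F' where "F' = (\<lambda>y. f y / (1 + y powr p) * (1 + c * ln (1 + y powr p) + c * p * y powr p))"
  have dF: "(F has_real_derivative F' y) (at y)" if "0 < y" "y < x" for y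
  proof -
    have e2: "y powr (p - 1) = y powr p / y" using that by (simp add: powr_diff)
    have dL: "((\<lambda>y. ln (1 + y powr p)) has_real_derivative (p * y powr (p - 1) / (1 + y powr p))) (at y)"
      using that B[of y] by (auto intro!: derivative_eq_intros simp: field_simps)
    have D: "((\<lambda>y. y * (1 + y powr p) powr (-1/p) * (1 + c * ln (1 + y powr p))) has_real_derivative
       ((1 * (1 + y powr p) powr (-1/p) + (- (y powr p / y) * ((1 + y powr p) powr (-1/p)) / (1 + y powr p)) * y)
        * (1 + c * ln (1 + y powr p)) + (0 + c * (p * y powr (p - 1) / (1 + y powr p))) * (y * (1 + y powr p) powr (-1/p)))) (at y)"
      by (intro DERIV_mult DERIV_ident dw[OF p that(1)] DERIV_add DERIV_const DERIV_cmult dL)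
    show ?thesis unfolding F_def
    proof (rule DERIV_cong[OF D])
      show "(1 * (1 + y powr p) powr (-1/p) + (- (y powr p / y) * ((1 + y powr p) powr (-1/p)) / (1 + y powr p)) * y)
        * (1 + c * ln (1 + y powr p)) + (0 + c * (p * y powr (p - 1) / (1 + y powr p))) * (y * (1 + y powr p) powr (-1/p))
        = F' y"
      unfolding F'_def f_def e2 using alg1[OF that(1) B[of y]] by simp
    qed
  qed
  have cmp: "F' y < f y \<longleftrightarrow> c * (ln (1 + y powr p) + p * y powr p) < y powr p"
    and cmp2: "F' y > f y \<longleftrightarrow> c * (ln (1 + y powr p) + p * y powr p) > y powr p" for y
  proof -
    have fp: "f y > 0" unfolding f_def using B[of y] by simp
    define r where "r = (1 + c * ln (1 + y powr p) + c * p * y powr p) / (1 + y powr p)"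
    have Fr: "F' y = f y * r" unfolding F'_def r_def by simp
    have "F' y < f y \<longleftrightarrow> r < 1" unfolding Fr
      using mult_less_cancel_left_pos[OF fp, of r 1] by simp
    moreover have "F' y > f y \<longleftrightarrow> r > 1" unfolding Fr
      using mult_less_cancel_left_pos[OF fp, of 1 r] by simp
    moreover have "r < 1 \<longleftrightarrow> c * (ln (1 + y powr p) + p * y powr p) < y powr p"
      unfolding r_def using B[of y] by (simp add: field_simps)
    moreover have "r > 1 \<longleftrightarrow> c * (ln (1 + y powr p) + p * y powr p) > y powr p"
      unfolding r_def using B[of y] by (simp add: field_simps)
    ultimately show "F' y < f y \<longleftrightarrow> c * (ln (1 + y powr p) + p * y powr p) < y powr p"
      and "F' y > f y \<longleftrightarrow> c * (ln (1 + y powr p) + p * y powr p) > y powr p" by simp_all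
  qed
  show "(\<And>y. 0 < y \<Longrightarrow> c * (ln (1 + y powr p) + p * y powr p) < y powr p) \<Longrightarrow> F x < integral {0..x} f"
    using key(1)[OF x cW cF F0 dF] cmp by auto
  show "(\<And>y. 0 < y \<Longrightarrow> c * (ln (1 + y powr p) + p * y powr p) > y powr p) \<Longrightarrow> F x > integral {0..x} f"
    using key(2)[OF x cW cF F0 dF] cmp2 by auto
qed

theorem theorem1p2:
  fixes p x :: real
  assumes "p > 1" and "0 < x" and "x < 1"
  defines "z \<equiv> (x powr p / (1 + x powr p)) powr (1 / p)"
  shows "z * (1 + ln (1 + x powr p) / (1 + p)) < arsinh_p p x
         \<and> arsinh_p p x < z * (1 + (1 / p) * ln (1 + x powr p))
         \<and> x * (1 - (1 / (1 + p)) * ln (1 - x powr p)) < artanh_p p x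
         \<and> artanh_p p x < x * (1 - (1 / p) * ln (1 - x powr p))"
proof -
  have B: "0 < 1 + x powr p" by (simp add: add_pos_nonneg)
  have z: "z = x * (1 + x powr p) powr (-1/p)"
  proof -
    have "z = (x powr p) powr (1/p) / (1 + x powr p) powr (1/p)"
      unfolding z_def using B by (simp add: powr_divide less_imp_le)
    also have "(x powr p) powr (1/p) = x" using assms(1,2) by (simp add: powr_powr)
    finally show ?thesis using B by (simp add: powr_minus_divide divide_inverse)
  qed
  have lo: "x * (1 + x powr p) powr (-1/p) * (1 + (1/(1+p)) * ln (1 + x powr p)) < arsinh_p p x"
    unfolding arsinh_p_def
  proof (rule ars_gen(1)[OF assms(1,2)])
    fix y :: real assume y: "0 < y"
    have u: "0 < y powr p" using y by simp
    have "ln (1 + y powr p) < y powr p" using u by (rule ln_add_one_self_less_self)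
    then have "ln (1 + y powr p) + p * y powr p < (1 + p) * y powr p" by (simp add: algebra_simps)
    then show "1 / (1 + p) * (ln (1 + y powr p) + p * y powr p) < y powr p"
      using assms(1) by (simp add: field_simps)
  qed
  have up: "arsinh_p p x < x * (1 + x powr p) powr (-1/p) * (1 + (1/p) * ln (1 + x powr p))"
    unfolding arsinh_p_def
  proof (rule ars_gen(2)[OF assms(1,2)])
    fix y :: real assume y: "0 < y"
    have u: "0 < y powr p" using y by simp
    have "ln (1 + y powr p) > 0" using u by (intro ln_gt_zero) simp
    then have "ln (1 + y powr p) + p * y powr p > p * y powr p" by simp
    then show "1 / p * (ln (1 + y powr p) + p * y powr p) > y powr p"
      using assms(1) by (simp add: field_simps)
  qed
  show ?thesis using lo up art[OF assms(1-3)] unfolding z by simp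
qed
end
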